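(* Let $T=T(n,a,b)$ with $a\ge 0$, $b\ge a+2$ and $2(a+b)<n-1$, let $\ell=n-a-b$ and $x=x(T)$. Let $e$ be the edge of $T$ containing both $v_{\ell-b}$ and $v_{\ell-b+1}$, and let $T_1$ and $T_2$ be the components of $T-e$ containing $v_{\ell-b}$ and $v_{\ell-b+1}$, respectively. If $b\ge\frac{\ell}{2}$, then $\sigma_T(T_1)<\sigma_T(T_2)$.
   Context: Hypergraphs have edges that are vertex subsets of size at least two; distance $d_T(u,v)$ in a hypertree is the length of a shortest loose path (an alternating sequence of distinct vertices and distinct edges $(v_0,e_1,v_1,\dots,e_p,v_p)$ with $v_{i-1},v_i\in e_i$ and non-consecutive edges disjoint). $D(T)$ is the distance matrix, $\rho(T)$ its largest eigenvalue, $x(T)$ the unit positive eigenvector for $\rho(T)$. $T-e$ has vertex set $V(T)$ and edge set $E(T)\setminus\{e\}$. For a subhypergraph $H$, $\sigma_T(H)=\sum_{v\in V(H)}x_v$. For integers $n,a,b$ with $0\le a\le b$ and $a+b\le\lfloor\frac{n-1}{2}\rfloor$, put $\ell=n-a-b$ and $I=\{1,\dots,a\}\cup\{\ell-b,\dots,\ell-1\}$; $T(n,a,b)$ is the hypertree with vertex set $\{v_1,\dots,v_\ell\}\cup\{w_i:i\in I\}$ and edges $\{v_i,w_i,v_{i+1}\}$ for $i\in I$ and $\{v_i,v_{i+1}\}$ for $i\in\{1,\dots,\ell-1\}\setminus I$. *)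

theory Defs
  imports Complex_Main
begin

definition loose_path :: "'a set set \<Rightarrow> 'a list \<Rightarrow> 'a set list \<Rightarrow> bool" where
  "loose_path E vs es \<longleftrightarrow>
     length vs = length es + 1 \<and> distinct vs \<and> distinct es \<and> set es \<subseteq> E \<and>
     (\<forall>i<length es. vs ! i \<in> es ! i \<and> vs ! Suc i \<in> es ! i) \<and>
     (\<forall>i j. Suc i < j \<and> j < length es \<longrightarrow> es ! i \<inter> es ! j = {})"

definition hdist :: "'a set set \<Rightarrow> 'a \<Rightarrow> 'a \<Rightarrow> nat" where
  "hdist E u v = (LEAST p. \<exists>vs es. loose_path E vs es \<and> hd vs = u \<and> last vs = v \<and> length es = p)"

definition dist_spec_radius :: "'a set \<Rightarrow> 'a set set \<Rightarrow> real" where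
  "dist_spec_radius V E = Max {r. \<exists>y :: 'a \<Rightarrow> real. (\<exists>u\<in>V. y u \<noteq> 0) \<and>
      (\<forall>u\<in>V. (\<Sum>v\<in>V. real (hdist E u v) * y v) = r * y u)}"

definition perron_vector :: "'a set \<Rightarrow> 'a set set \<Rightarrow> ('a \<Rightarrow> real) \<Rightarrow> bool" where
  "perron_vector V E x \<longleftrightarrow> (\<forall>v\<in>V. x v > 0) \<and> (\<Sum>v\<in>V. (x v)\<^sup>2) = 1 \<and>
     (\<forall>u\<in>V. (\<Sum>v\<in>V. real (hdist E u v) * x v) = dist_spec_radius V E * x u)"

definition hcomponent :: "'a set \<Rightarrow> 'a set set \<Rightarrow> 'a \<Rightarrow> 'a set" where
  "hcomponent V E v = {u\<in>V. (v, u) \<in> {(x, y). \<exists>f\<in>E. x \<in> f \<and> y \<in> f}\<^sup>*}"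

datatype vtx = V nat | W nat

definition Tidx :: "nat \<Rightarrow> nat \<Rightarrow> nat \<Rightarrow> nat set" where
  "Tidx n a b = (let l = n - a - b in {1..a} \<union> {l - b..l - 1})"

definition Tverts :: "nat \<Rightarrow> nat \<Rightarrow> nat \<Rightarrow> vtx set" where
  "Tverts n a b = (let l = n - a - b in V ` {1..l} \<union> W ` Tidx n a b)"

definition Tedges :: "nat \<Rightarrow> nat \<Rightarrow> nat \<Rightarrow> vtx set set" where
  "Tedges n a b = (let l = n - a - b in
      (\<lambda>i. {V i, W i, V (Suc i)}) ` Tidx n a b \<union>
      (\<lambda>i. {V i, V (Suc i)}) ` ({1..l - 1} - Tidx n a b))"

end

theory Submission
  imports Defs
begin


lemma key_extremal:
  fixes A :: "'a set" and y S Hh :: "'a \<Rightarrow> real" and \<rho> :: real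
  assumes fin: "finite A" and rho: "\<rho> > 0" and Spos: "\<forall>u\<in>A. S u > 0"
    and Hnn: "\<forall>u\<in>A. Hh u \<ge> 0" and u1: "u1 \<in> A"
    and ineq: "\<forall>u\<in>A. (\<rho> + Hh u) * y u + (\<Sum>w\<in>A. min (S u) (S w) * y w) \<ge> 0"
    and strict: "(\<rho> + Hh u1) * y u1 + (\<Sum>w\<in>A. min (S u1) (S w) * y w) > 0"
  shows "(\<Sum>w\<in>A. y w) > 0"
proof (rule ccontr)
  assume neg: "\<not> (\<Sum>w\<in>A. y w) > 0"
  have allnn: "\<forall>u\<in>A. y u \<ge> 0"
  proof (rule ccontr)
    assume "\<not> (\<forall>u\<in>A. y u \<ge> 0)"
    define N where "N = {u\<in>A. y u < 0}"
    have Nne: "N \<noteq> {}" using \<open>\<not> (\<forall>u\<in>A. y u \<ge> 0)\<close> unfolding N_def by force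
    have Nfin: "finite N" using fin unfolding N_def by simp
    define m where "m = Min (S ` N)"
    have "m \<in> S ` N" unfolding m_def using Nne Nfin by simp
    then obtain u0 where u0N: "u0 \<in> N" and Su0: "S u0 = m" by auto
    have mle: "\<forall>w\<in>N. S u0 \<le> S w" using Nfin Su0 unfolding m_def by simp
    have u0A: "u0 \<in> A" and yu0: "y u0 < 0" using u0N unfolding N_def by auto
    have termle: "\<forall>w\<in>A. min (S u0) (S w) * y w \<le> S u0 * y w"
    proof
      fix w assume wA: "w \<in> A"
      show "min (S u0) (S w) * y w \<le> S u0 * y w"
      proof (cases "y w < 0")
        case True
        then have "w \<in> N" using wA unfolding N_def by simp
        then have "S u0 \<le> S w" using mle by simp
        then show ?thesis by simp
      next
        case False
        then show ?thesis by (simp add: mult_right_mono)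
      qed
    qed
    have "(\<Sum>w\<in>A. min (S u0) (S w) * y w) \<le> (\<Sum>w\<in>A. S u0 * y w)"
      using termle by (intro sum_mono) auto
    also have "\<dots> = S u0 * (\<Sum>w\<in>A. y w)" by (simp add: sum_distrib_left)
    also have "\<dots> \<le> 0" using neg Spos u0A by (intro mult_nonneg_nonpos) (auto simp: less_imp_le)
    finally have "(\<Sum>w\<in>A. min (S u0) (S w) * y w) \<le> 0" .
    then have "(\<rho> + Hh u0) * y u0 \<ge> 0" using ineq u0A by force
    moreover have "\<rho> + Hh u0 > 0" using rho Hnn u0A by force
    ultimately have "y u0 \<ge> 0" by (simp add: zero_le_mult_iff)
    then show False using yu0 by simp
  qed
  then have "(\<Sum>w\<in>A. y w) \<ge> 0" by (simp add: sum_nonneg)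
  then have "(\<Sum>w\<in>A. y w) = 0" using neg by simp
  then have y0: "\<forall>w\<in>A. y w = 0" using sum_nonneg_eq_0_iff[OF fin] allnn by blast
  have "(\<rho> + Hh u1) * y u1 + (\<Sum>w\<in>A. min (S u1) (S w) * y w) = 0"
    using y0 u1 by simp
  then show False using strict by simp
qed



fun P :: "vtx \<Rightarrow> int" where "P (V i) = 2 * int i" | "P (W i) = 2 * int i + 1"
fun Hh :: "vtx \<Rightarrow> int" where "Hh (V i) = 0" | "Hh (W i) = 1"

lemma P_inj: "P u = P v \<Longrightarrow> u = v"
  by (cases u; cases v) (auto, presburger+)

lemma Hh_ge: "Hh u \<ge> 0" "Hh u \<le> 1" by (cases u; simp)+

definition dd :: "vtx \<Rightarrow> vtx \<Rightarrow> int" where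
  "dd u v = (if u = v then 0 else \<bar>P u - P v\<bar> + Hh u + Hh v)"

lemma dd_sym: "dd u v = dd v u" unfolding dd_def by auto

lemma dd_tri: "dd x z \<le> dd x y + dd y z"
  using Hh_ge[of x] Hh_ge[of y] Hh_ge[of z] unfolding dd_def by auto

lemma lp_lower:
  assumes E2: "\<forall>f\<in>E. \<forall>x\<in>f. \<forall>y\<in>f. dd x y \<le> 2"
    and lp: "loose_path E vs es"
  shows "dd (hd vs) (last vs) \<le> 2 * int (length es)"
proof -
  have len: "length vs = length es + 1" and inc: "\<forall>i<length es. vs ! i \<in> es ! i \<and> vs ! Suc i \<in> es ! i"
    and sub: "set es \<subseteq> E"
    using lp unfolding loose_path_def by auto
  have step: "\<forall>k\<le>length es. dd (vs ! 0) (vs ! k) \<le> 2 * int k"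
  proof
    fix k show "k \<le> length es \<longrightarrow> dd (vs ! 0) (vs ! k) \<le> 2 * int k"
    proof (induction k)
      case 0 then show ?case by (simp add: dd_def)
    next
      case (Suc k)
      show ?case
      proof
        assume k: "Suc k \<le> length es"
        then have ek: "es ! k \<in> E" using sub by (simp add: subset_code(1))
        have "dd (vs ! k) (vs ! Suc k) \<le> 2" using E2 ek inc k by auto
        moreover have "dd (vs ! 0) (vs ! k) \<le> 2 * int k" using Suc k by simp
        ultimately show "dd (vs ! 0) (vs ! Suc k) \<le> 2 * int (Suc k)"
          using dd_tri[where x="vs ! 0" and y="vs ! k" and z="vs ! Suc k"] by simp
      qed
    qed
  qed
  have "vs \<noteq> []" using len by auto
  then have "hd vs = vs ! 0" "last vs = vs ! length es" using len by (auto simp: hd_conv_nth last_conv_nth)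
  then show ?thesis using step by simp
qed

lemma lp_rev:
  assumes "loose_path E vs es" shows "loose_path E (rev vs) (rev es)"
proof -
  have len: "length vs = length es + 1" and inc: "\<forall>i<length es. vs ! i \<in> es ! i \<and> vs ! Suc i \<in> es ! i"
    and dj: "\<forall>i j. Suc i < j \<and> j < length es \<longrightarrow> es ! i \<inter> es ! j = {}"
    using assms unfolding loose_path_def by auto
  have inc': "\<forall>i<length es. rev vs ! i \<in> rev es ! i \<and> rev vs ! Suc i \<in> rev es ! i"
  proof (intro allI impI)
    fix i assume i: "i < length es"
    have a: "rev vs ! i = vs ! (length es - i)" using i len by (simp add: rev_nth)
    have b: "rev vs ! Suc i = vs ! (length es - Suc i)" using i len by (simp add: rev_nth)
    have c: "rev es ! i = es ! (length es - Suc i)" using i by (simp add: rev_nth)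
    have "Suc (length es - Suc i) = length es - i" using i by simp
    then show "rev vs ! i \<in> rev es ! i \<and> rev vs ! Suc i \<in> rev es ! i"
      using a b c inc i by (metis diff_less zero_less_Suc less_le_trans Suc_leI)
  qed
  have dj': "\<forall>i j. Suc i < j \<and> j < length es \<longrightarrow> rev es ! i \<inter> rev es ! j = {}"
  proof (intro allI impI)
    fix i j assume ij: "Suc i < j \<and> j < length es"
    have "rev es ! i = es ! (length es - Suc i)" "rev es ! j = es ! (length es - Suc j)"
      using ij by (auto simp: rev_nth)
    moreover have "Suc (length es - Suc j) < length es - Suc i" "length es - Suc i < length es" using ij by auto
    ultimately show "rev es ! i \<inter> rev es ! j = {}" using dj by (metis inf_commute)
  qed
  show ?thesis using assms inc' dj' unfolding loose_path_def by auto
qed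

lemma lp_intro:
  assumes "inj_on f {0..L}" "inj_on g {0..<L}" "\<forall>k<L. g k \<in> E"
    "\<forall>k<L. f k \<in> g k \<and> f (Suc k) \<in> g k"
    "\<forall>i j. Suc i < j \<and> j < L \<longrightarrow> g i \<inter> g j = {}"
  shows "loose_path E (map f [0..<Suc L]) (map g [0..<L])"
proof -
  have "{0..<Suc L} = {0..L}" by auto
  then show ?thesis using assms unfolding loose_path_def
    by (auto simp: distinct_map nth_append simp del: upt_Suc)
qed

definition ed :: "nat set \<Rightarrow> nat \<Rightarrow> vtx set" where
  "ed J k = (if k \<in> J then {V k, W k, V (Suc k)} else {V k, V (Suc k)})"

definition Es :: "nat \<Rightarrow> nat set \<Rightarrow> vtx set set" where
  "Es l J = ed J ` {1..l-1}"

definition Vs :: "nat \<Rightarrow> nat set \<Rightarrow> vtx set" where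
  "Vs l J = V ` {1..l} \<union> W ` J"

lemma ed_inj: "ed J i = ed J k \<Longrightarrow> i = k"
proof -
  assume h: "ed J i = ed J k"
  have "V i \<in> ed J k" "V k \<in> ed J i" using h unfolding ed_def by (auto split: if_splits)
  then show "i = k" unfolding ed_def by (auto split: if_splits)
qed

lemma ed_disj: "Suc i < k \<Longrightarrow> ed J i \<inter> ed J k = {}"
  unfolding ed_def by auto

lemma Es_dd2: "\<forall>f\<in>Es l J. \<forall>x\<in>f. \<forall>y\<in>f. dd x y \<le> 2"
  unfolding Es_def ed_def dd_def by auto

lemma spine_lp:
  assumes "1 \<le> i" "i + L \<le> l" "inj_on f {0..L}"
    "\<forall>k<L. f k \<in> ed J (i+k) \<and> f (Suc k) \<in> ed J (i+k)"
  shows "loose_path (Es l J) (map f [0..<Suc L]) (map (\<lambda>k. ed J (i+k)) [0..<L])"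
proof (rule lp_intro)
  show "inj_on (\<lambda>k. ed J (i + k)) {0..<L}"
    by (auto simp: inj_on_def dest: ed_inj)
  show "\<forall>k<L. ed J (i + k) \<in> Es l J" using assms(1,2) unfolding Es_def by auto
  show "\<forall>ia j. Suc ia < j \<and> j < L \<longrightarrow> ed J (i + ia) \<inter> ed J (i + j) = {}"
  proof (intro allI impI)
    fix ia j assume "Suc ia < j \<and> j < L"
    then have "Suc (i + ia) < i + j" by simp
    then show "ed J (i + ia) \<inter> ed J (i + j) = {}" by (rule ed_disj)
  qed
qed (use assms in auto)

definition okp :: "vtx set set \<Rightarrow> vtx \<Rightarrow> vtx \<Rightarrow> bool" where
  "okp E u v \<longleftrightarrow> (\<exists>vs es. loose_path E vs es \<and> hd vs = u \<and> last vs = v \<and> 2 * int (length es) = dd u v)"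

lemma okp_sym: "okp E u v \<Longrightarrow> okp E v u"
  unfolding okp_def
proof (elim exE conjE)
  fix vs es assume a: "loose_path E vs es" "hd vs = u" "last vs = v" "2 * int (length es) = dd u v"
  have ne: "vs \<noteq> []" using a(1) unfolding loose_path_def by auto
  show "\<exists>vs es. loose_path E vs es \<and> hd vs = v \<and> last vs = u \<and> 2 * int (length es) = dd v u"
    apply (rule exI[of _ "rev vs"], rule exI[of _ "rev es"])
    using a ne lp_rev[OF a(1)] by (simp add: hd_rev last_rev dd_sym)
qed

lemma okp_refl: "okp E u u"
  unfolding okp_def by (rule exI[of _ "[u]"], rule exI[of _ "[]"]) (simp add: loose_path_def dd_def)

lemma okp_intro:
  assumes "1 \<le> i" "i + L \<le> l" "inj_on f {0..L}"
    "\<forall>k<L. f k \<in> ed J (i+k) \<and> f (Suc k) \<in> ed J (i+k)"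
    "f 0 = u" "f L = v" "2 * int L = dd u v"
  shows "okp (Es l J) u v"
  unfolding okp_def
  apply (rule exI[of _ "map f [0..<Suc L]"], rule exI[of _ "map (\<lambda>k. ed J (i+k)) [0..<L]"])
  using spine_lp[OF assms(1-4)] assms(5-7) by (simp add: hd_map last_map del: upt_Suc)

lemma ok_VV: assumes "1 \<le> i" "i < j" "j \<le> l" shows "okp (Es l J) (V i) (V j)"
  by (rule okp_intro[where i=i and L="j-i" and f="\<lambda>k. V (i+k)"])
     (use assms in \<open>auto simp: inj_on_def ed_def dd_def\<close>)

lemma ok_VW: assumes "1 \<le> i" "i \<le> j" "j \<in> J" "J \<subseteq> {1..l-1}" shows "okp (Es l J) (V i) (W j)"
proof -
  have jl: "j + 1 \<le> l" using assms(3,4) by force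
  have hk: "\<And>k. k < Suc (j - i) \<Longrightarrow> \<not> Suc k \<le> j - i \<Longrightarrow> i + k \<in> J"
  proof -
    fix k assume "k < Suc (j - i)" "\<not> Suc k \<le> j - i"
    then have "i + k = j" using assms(2) by arith
    then show "i + k \<in> J" using assms(3) by simp
  qed
  show ?thesis
  by (rule okp_intro[where i=i and L="j-i+1" and f="\<lambda>k. if k \<le> j - i then V (i+k) else W j"])
     (use assms jl hk in \<open>auto simp: inj_on_def ed_def dd_def\<close>)
qed

lemma ok_WV: assumes "i < j" "j \<le> l" "i \<in> J" "J \<subseteq> {1..l-1}" shows "okp (Es l J) (W i) (V j)"
proof -
  have i1: "1 \<le> i" using assms(3,4) by force
  show ?thesis
  by (rule okp_intro[where i=i and L="j-i" and f="\<lambda>k. if k = 0 then W i else V (i+k)"])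
     (use assms i1 in \<open>auto simp: inj_on_def ed_def dd_def\<close>)
qed

lemma ok_WW: assumes "i < j" "i \<in> J" "j \<in> J" "J \<subseteq> {1..l-1}" shows "okp (Es l J) (W i) (W j)"
proof -
  have i1: "1 \<le> i" using assms(2,4) by force
  have jl: "j + 1 \<le> l" using assms(3,4) by force
  have hk: "\<And>k. k < Suc (j - i) \<Longrightarrow> \<not> Suc k \<le> j - i \<Longrightarrow> i + k \<in> J"
  proof -
    fix k assume "k < Suc (j - i)" "\<not> Suc k \<le> j - i"
    then have "i + k = j" using assms(1) by arith
    then show "i + k \<in> J" using assms(3) by simp
  qed
  show ?thesis
  by (rule okp_intro[where i=i and L="j-i+1" and f="\<lambda>k. if k = 0 then W i else if k \<le> j - i then V (i+k) else W j"])
     (use assms i1 jl hk in \<open>auto simp: inj_on_def ed_def dd_def\<close>)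
qed

lemma ok_lt:
  assumes J: "J \<subseteq> {1..l-1}" and u: "u \<in> Vs l J" and v: "v \<in> Vs l J" and lt: "P u < P v"
  shows "okp (Es l J) u v"
proof -
  have Jl: "\<And>j. j \<in> J \<Longrightarrow> 1 \<le> j \<and> j + 1 \<le> l" using J by force
  show ?thesis
  proof (cases u)
    case (V i)
    then have i: "1 \<le> i" "i \<le> l" using u unfolding Vs_def by auto
    show ?thesis
    proof (cases v)
      case (V j)
      then have "j \<le> l" using v unfolding Vs_def by auto
      then show ?thesis using ok_VV[of i j l J] i lt \<open>u = V i\<close> V by simp
    next
      case (W j)
      then have "j \<in> J" using v unfolding Vs_def by auto
      moreover have "i \<le> j" using lt \<open>u = V i\<close> W by simp
      ultimately show ?thesis using ok_VW[of i j J l] i J \<open>u = V i\<close> W by simp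
    qed
  next
    case (W i)
    then have i: "i \<in> J" using u unfolding Vs_def by auto
    show ?thesis
    proof (cases v)
      case (V j)
      then have "j \<le> l" using v unfolding Vs_def by auto
      moreover have "i < j" using lt \<open>u = W i\<close> V by simp
      ultimately show ?thesis using ok_WV[of i j l J] i J \<open>u = W i\<close> V by simp
    next
      case (W j)
      then have "j \<in> J" using v unfolding Vs_def by auto
      moreover have "i < j" using lt \<open>u = W i\<close> W by simp
      ultimately show ?thesis using ok_WW[of i j J l] i J \<open>u = W i\<close> W by simp
    qed
  qed
qed

lemma ok_all:
  assumes J: "J \<subseteq> {1..l-1}" and u: "u \<in> Vs l J" and v: "v \<in> Vs l J"
  shows "okp (Es l J) u v"
proof -
  consider "P u < P v" | "P v < P u" | "u = v" using P_inj by fastforce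
  then show ?thesis
  proof cases
    case 1 then show ?thesis using ok_lt assms by blast
  next
    case 2 then show ?thesis using ok_lt assms okp_sym by blast
  next
    case 3 then show ?thesis using okp_refl by simp
  qed
qed

lemma hdist_formula:
  assumes J: "J \<subseteq> {1..l-1}" and u: "u \<in> Vs l J" and v: "v \<in> Vs l J"
  shows "2 * int (hdist (Es l J) u v) = dd u v"
proof -
  obtain vs es where p: "loose_path (Es l J) vs es" "hd vs = u" "last vs = v" "2 * int (length es) = dd u v"
    using ok_all[OF assms] unfolding okp_def by blast
  have "hdist (Es l J) u v = length es"
    unfolding hdist_def
  proof (rule Least_equality)
    show "\<exists>vs' es'. loose_path (Es l J) vs' es' \<and> hd vs' = u \<and> last vs' = v \<and> length es' = length es"
      using p by blast
  next
    fix m assume "\<exists>vs es. loose_path (Es l J) vs es \<and> hd vs = u \<and> last vs = v \<and> length es = m"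
    then obtain vs' es' where q: "loose_path (Es l J) vs' es'" "hd vs' = u" "last vs' = v" "length es' = m" by blast
    have "dd u v \<le> 2 * int m" using lp_lower[OF Es_dd2 q(1)] q by simp
    then show "length es \<le> m" using p(4) by simp
  qed
  then show ?thesis using p(4) by simp
qed



definition RR :: "vtx set set \<Rightarrow> (vtx \<times> vtx) set" where
  "RR E = {(x, y). \<exists>f\<in>E. x \<in> f \<and> y \<in> f}"

lemma hcomp_RR: "hcomponent V0 E v = {u\<in>V0. (v, u) \<in> (RR E)\<^sup>*}"
  unfolding hcomponent_def RR_def by simp

lemma ed_P: "x \<in> ed J k \<Longrightarrow> 2 * int k \<le> P x \<and> P x \<le> 2 * int k + 2"
  unfolding ed_def by (auto split: if_splits)

lemma RR_inv:
  assumes "(x, y) \<in> RR (Es l J - {ed J p})"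
  shows "(P x < 2 * int p + 1 \<longleftrightarrow> P y < 2 * int p + 1) \<and> (P x > 2 * int p + 1 \<longleftrightarrow> P y > 2 * int p + 1)"
proof -
  obtain k where k: "ed J k \<in> Es l J" "ed J k \<noteq> ed J p" "x \<in> ed J k" "y \<in> ed J k"
    using assms unfolding RR_def Es_def by auto
  have "k \<noteq> p" using k(2) by auto
  then consider "k < p" | "k > p" by arith
  then show ?thesis
  proof cases
    case 1 then show ?thesis using ed_P[OF k(3)] ed_P[OF k(4)] by auto
  next
    case 2 then show ?thesis using ed_P[OF k(3)] ed_P[OF k(4)] by auto
  qed
qed

lemma RR_star_inv:
  assumes "(x, y) \<in> (RR (Es l J - {ed J p}))\<^sup>*"
  shows "(P x < 2 * int p + 1 \<longleftrightarrow> P y < 2 * int p + 1) \<and> (P x > 2 * int p + 1 \<longleftrightarrow> P y > 2 * int p + 1)"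
  using assms
proof (induction rule: rtrancl_induct)
  case base then show ?case by simp
next
  case (step y z) then show ?case using RR_inv[OF step(2)] by blast
qed

lemma RR_edge:
  assumes "1 \<le> k" "k + 1 \<le> l" "k \<noteq> p" "x \<in> ed J k" "y \<in> ed J k"
  shows "(x, y) \<in> RR (Es l J - {ed J p})"
proof -
  have "ed J k \<in> Es l J - {ed J p}" using assms(1-3) ed_inj unfolding Es_def by fastforce
  then show ?thesis using assms(4,5) unfolding RR_def by blast
qed

lemma reach_left:
  assumes "1 \<le> p" "p + 1 \<le> l"
  shows "\<forall>d. d < p \<longrightarrow> (V p, V (p - d)) \<in> (RR (Es l J - {ed J p}))\<^sup>*"
proof
  fix d show "d < p \<longrightarrow> (V p, V (p - d)) \<in> (RR (Es l J - {ed J p}))\<^sup>*"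
  proof (induction d)
    case 0 then show ?case by simp
  next
    case (Suc d)
    show ?case
    proof
      assume d: "Suc d < p"
      have "(V (p - d), V (p - Suc d)) \<in> RR (Es l J - {ed J p})"
        using RR_edge[of "p - Suc d" l p "V (p - d)" J "V (p - Suc d)"] d assms
        unfolding ed_def by (auto simp: Suc_diff_Suc)
      then show "(V p, V (p - Suc d)) \<in> (RR (Es l J - {ed J p}))\<^sup>*"
        using Suc d by (meson Suc_lessD rtrancl.rtrancl_into_rtrancl)
    qed
  qed
qed

lemma reach_right:
  assumes "1 \<le> p"
  shows "\<forall>d. p + 1 + d \<le> l \<longrightarrow> (V (p + 1), V (p + 1 + d)) \<in> (RR (Es l J - {ed J p}))\<^sup>*"
proof
  fix d show "p + 1 + d \<le> l \<longrightarrow> (V (p + 1), V (p + 1 + d)) \<in> (RR (Es l J - {ed J p}))\<^sup>*"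
  proof (induction d)
    case 0 then show ?case by simp
  next
    case (Suc d)
    show ?case
    proof
      assume d: "p + 1 + Suc d \<le> l"
      have "(V (p + 1 + d), V (p + 1 + Suc d)) \<in> RR (Es l J - {ed J p})"
        using RR_edge[of "p + 1 + d" l p "V (p + 1 + d)" J "V (p + 1 + Suc d)"] d assms
        unfolding ed_def by auto
      then show "(V (p + 1), V (p + 1 + Suc d)) \<in> (RR (Es l J - {ed J p}))\<^sup>*"
      proof -
        have "p + 1 + d \<le> l" using d by simp
        then have "(V (p + 1), V (p + 1 + d)) \<in> (RR (Es l J - {ed J p}))\<^sup>*" using Suc by simp
        then show ?thesis using \<open>(V (p + 1 + d), V (p + 1 + Suc d)) \<in> RR (Es l J - {ed J p})\<close>
          by (rule rtrancl_into_rtrancl)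
      qed
    qed
  qed
qed

lemma comp_left:
  assumes J: "J \<subseteq> {1..l-1}" and p: "1 \<le> p" "p + 1 \<le> l"
  shows "hcomponent (Vs l J) (Es l J - {ed J p}) (V p) = {u \<in> Vs l J. P u < 2 * int p + 1}"
  unfolding hcomp_RR
proof (intro set_eqI iffI)
  fix u assume "u \<in> {u \<in> Vs l J. (V p, u) \<in> (RR (Es l J - {ed J p}))\<^sup>*}"
  then show "u \<in> {u \<in> Vs l J. P u < 2 * int p + 1}" using RR_star_inv[of "V p" u l J p] by auto
next
  fix u assume u: "u \<in> {u \<in> Vs l J. P u < 2 * int p + 1}"
  have RL: "\<And>i. 1 \<le> i \<Longrightarrow> i \<le> p \<Longrightarrow> (V p, V i) \<in> (RR (Es l J - {ed J p}))\<^sup>*"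
  proof -
    fix i assume "1 \<le> i" "i \<le> p"
    then show "(V p, V i) \<in> (RR (Es l J - {ed J p}))\<^sup>*"
      using reach_left[OF p, rule_format, of "p - i"] by simp
  qed
  show "u \<in> {u \<in> Vs l J. (V p, u) \<in> (RR (Es l J - {ed J p}))\<^sup>*}"
  proof (cases u)
    case (V i)
    then show ?thesis using u RL unfolding Vs_def by auto
  next
    case (W j)
    then have j: "j \<in> J" "j < p" using u unfolding Vs_def by auto
    have j1: "1 \<le> j" using j J by force
    have "(V j, W j) \<in> RR (Es l J - {ed J p})"
      using RR_edge[of j l p "V j" J "W j"] j j1 p unfolding ed_def by auto
    then show ?thesis using RL[of j] j j1 u W by (auto intro: rtrancl_into_rtrancl)
  qed
qed

lemma comp_right:
  assumes J: "J \<subseteq> {1..l-1}" and p: "1 \<le> p" "p + 1 \<le> l"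
  shows "hcomponent (Vs l J) (Es l J - {ed J p}) (V (p + 1)) = {u \<in> Vs l J. P u > 2 * int p + 1}"
  unfolding hcomp_RR
proof (intro set_eqI iffI)
  fix u assume "u \<in> {u \<in> Vs l J. (V (p + 1), u) \<in> (RR (Es l J - {ed J p}))\<^sup>*}"
  then show "u \<in> {u \<in> Vs l J. P u > 2 * int p + 1}" using RR_star_inv[of "V (p + 1)" u l J p] by auto
next
  fix u assume u: "u \<in> {u \<in> Vs l J. P u > 2 * int p + 1}"
  have RL: "\<And>i. p + 1 \<le> i \<Longrightarrow> i \<le> l \<Longrightarrow> (V (p + 1), V i) \<in> (RR (Es l J - {ed J p}))\<^sup>*"
  proof -
    fix i assume "p + 1 \<le> i" "i \<le> l"
    then show "(V (p + 1), V i) \<in> (RR (Es l J - {ed J p}))\<^sup>*"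
      using reach_right[OF p(1), rule_format, of "i - (p + 1)"] by simp
  qed
  show "u \<in> {u \<in> Vs l J. (V (p + 1), u) \<in> (RR (Es l J - {ed J p}))\<^sup>*}"
  proof (cases u)
    case (V i)
    then show ?thesis using u RL unfolding Vs_def by auto
  next
    case (W j)
    then have j: "j \<in> J" "p < j" using u unfolding Vs_def by auto
    have jl: "j + 1 \<le> l" using j J by force
    have "(V j, W j) \<in> RR (Es l J - {ed J p})"
      using RR_edge[of j l p "V j" J "W j"] j jl p unfolding ed_def by auto
    then show ?thesis using RL[of j] j jl u W by (auto intro: rtrancl_into_rtrancl)
  qed
qed

lemma e_is:
  assumes "e \<in> Es l J" "V p \<in> e" "V (p + 1) \<in> e"
  shows "e = ed J p"
proof -
  obtain k where "e = ed J k" using assms(1) unfolding Es_def by auto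
  then show ?thesis using assms(2,3) unfolding ed_def by (auto split: if_splits)
qed



fun refl :: "nat \<Rightarrow> vtx \<Rightarrow> vtx" where
  "refl p (V i) = V (2 * p + 1 - i)" | "refl p (W j) = W (2 * p - j)"

lemma dd_P: "dd u v = (if P u = P v then 0 else \<bar>P u - P v\<bar> + Hh u + Hh v)"
  unfolding dd_def using P_inj by auto

lemma pair_a:
  assumes "P u < c" "P w < c" "P u' = 2*c - P u" "P w' = 2*c - P w" "Hh u' = Hh u" "Hh w' = Hh w"
  shows "dd u' w = dd u w'" "dd u' w' = dd u w"
    "dd u w' - dd u w = 2 * (min (c - P u) (c - P w) + (if u = w then Hh u else 0))"
proof -
  show "dd u' w = dd u w'" using assms unfolding dd_P by auto
  show "dd u' w' = dd u w" using assms unfolding dd_P by (auto simp: abs_if)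
  show "dd u w' - dd u w = 2 * (min (c - P u) (c - P w) + (if u = w then Hh u else 0))"
    using assms P_inj[of u w] unfolding dd_P by (auto simp: abs_if min_def)
qed

lemma pair_b:
  assumes "P u < c" "P u' = 2*c - P u" "Hh u' = Hh u" "P m = c"
  shows "dd u' m = dd u m"
  using assms unfolding dd_P by (auto simp: abs_if)

lemma pair_c:
  assumes "P u < c" "P u' = 2*c - P u" "Hh u' = Hh u" "P z > c" "z \<noteq> u'"
  shows "dd u' z - dd u z \<ge> -2 * (c - P u)"
proof -
  have "P z \<noteq> P u'" using assms(5) P_inj by metis
  then show ?thesis using assms unfolding dd_P by (auto simp: abs_if)
qed

lemma half_aux: "-2 * (A::real) \<le> B - C \<Longrightarrow> -A \<le> B / 2 - C / 2"
  by linarith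

lemma main_ineq:
  fixes l p a :: nat and J :: "nat set" and x :: "vtx \<Rightarrow> real" and \<rho> :: real
  assumes J: "J = {1..a} \<union> {p..l-1}" and ap: "a + 2 \<le> p" and pl: "2 * p \<le> l" and pl2: "p + 2 \<le> l"
    and xpos: "\<forall>v\<in>Vs l J. x v > 0"
    and perron: "\<forall>u\<in>Vs l J. (\<Sum>v\<in>Vs l J. real (hdist (Es l J) u v) * x v) = \<rho> * x u"
  shows "(\<Sum>v\<in>{u \<in> Vs l J. P u < 2 * int p + 1}. x v) < (\<Sum>v\<in>{u \<in> Vs l J. P u > 2 * int p + 1}. x v)"
proof -
  define c where "c = 2 * int p + 1"
  define VV where "VV = Vs l J"
  define T1 where "T1 = {u \<in> VV. P u < c}"
  define T2 where "T2 = {u \<in> VV. P u > c}"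
  define \<phi> where "\<phi> = refl p"
  have Jsub: "J \<subseteq> {1..l-1}" using J ap pl by auto
  have finV: "finite VV" unfolding VV_def Vs_def using J by simp
  have finT1: "finite T1" using finV unfolding T1_def by simp
  have finT2: "finite T2" using finV unfolding T2_def by simp
  have Dform: "\<And>u v. u \<in> VV \<Longrightarrow> v \<in> VV \<Longrightarrow> real (hdist (Es l J) u v) = real_of_int (dd u v) / 2"
  proof -
    fix u v assume "u \<in> VV" "v \<in> VV"
    then have "2 * int (hdist (Es l J) u v) = dd u v" using hdist_formula[OF Jsub] unfolding VV_def by blast
    then have "real_of_int (2 * int (hdist (Es l J) u v)) = real_of_int (dd u v)" by simp
    then show "real (hdist (Es l J) u v) = real_of_int (dd u v) / 2" by simp
  qed
  have T1_cases: "\<And>u. u \<in> T1 \<Longrightarrow> (\<exists>i. u = V i \<and> 1 \<le> i \<and> i \<le> p) \<or> (\<exists>j. u = W j \<and> 1 \<le> j \<and> j \<le> a)"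
  proof -
    fix u assume u: "u \<in> T1"
    show "(\<exists>i. u = V i \<and> 1 \<le> i \<and> i \<le> p) \<or> (\<exists>j. u = W j \<and> 1 \<le> j \<and> j \<le> a)"
    proof (cases u)
      case (V i) then show ?thesis using u unfolding T1_def VV_def Vs_def c_def by auto
    next
      case (W j) then show ?thesis using u J unfolding T1_def VV_def Vs_def c_def by auto
    qed
  qed
  have ph: "\<And>u. u \<in> T1 \<Longrightarrow> P (\<phi> u) = 2 * c - P u \<and> Hh (\<phi> u) = Hh u \<and> \<phi> u \<in> VV"
  proof -
    fix u assume u: "u \<in> T1"
    from T1_cases[OF u] show "P (\<phi> u) = 2 * c - P u \<and> Hh (\<phi> u) = Hh u \<and> \<phi> u \<in> VV"
    proof
      assume "\<exists>i. u = V i \<and> 1 \<le> i \<and> i \<le> p"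
      then obtain i where i: "u = V i" "1 \<le> i" "i \<le> p" by blast
      have "2 * p + 1 - i \<in> {1..l}" using i pl by auto
      then show ?thesis using i unfolding \<phi>_def c_def VV_def Vs_def by (auto simp: of_nat_diff)
    next
      assume "\<exists>j. u = W j \<and> 1 \<le> j \<and> j \<le> a"
      then obtain j where j: "u = W j" "1 \<le> j" "j \<le> a" by blast
      have "2 * p - j \<in> J" using j J ap pl by auto
      then show ?thesis using j ap unfolding \<phi>_def c_def VV_def Vs_def by (auto simp: of_nat_diff)
    qed
  qed
  have phT2: "\<And>u. u \<in> T1 \<Longrightarrow> \<phi> u \<in> T2"
    using ph unfolding T1_def T2_def by auto
  have inj: "inj_on \<phi> T1"
  proof (rule inj_onI)
    fix u w assume uw: "u \<in> T1" "w \<in> T1" "\<phi> u = \<phi> w"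
    have "P (\<phi> u) = 2 * c - P u" using ph[OF uw(1)] by simp
    moreover have "P (\<phi> w) = 2 * c - P w" using ph[OF uw(2)] by simp
    ultimately have "P u = P w" using uw(3) by simp
    then show "u = w" by (rule P_inj)
  qed
  define Z where "Z = T2 - \<phi> ` T1"
  have finZ: "finite Z" using finT2 unfolding Z_def by simp
  have WpV: "W p \<in> VV" using J ap pl unfolding VV_def Vs_def by auto
  have PWp: "P (W p) = c" unfolding c_def by simp
  have VVsplit: "VV = T1 \<union> (\<phi> ` T1 \<union> ({W p} \<union> Z))"
  proof
    show "VV \<subseteq> T1 \<union> (\<phi> ` T1 \<union> ({W p} \<union> Z))"
    proof
      fix u assume u: "u \<in> VV"
      consider "P u < c" | "P u > c" | "P u = c" by arith
      then show "u \<in> T1 \<union> (\<phi> ` T1 \<union> ({W p} \<union> Z))"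
      proof cases
        case 1 then show ?thesis using u unfolding T1_def by auto
      next
        case 2 then show ?thesis using u unfolding T2_def Z_def by auto
      next
        case 3 then have "u = W p" using PWp P_inj by metis
        then show ?thesis by simp
      qed
    qed
  next
    show "T1 \<union> (\<phi> ` T1 \<union> ({W p} \<union> Z)) \<subseteq> VV"
      using ph WpV unfolding T1_def Z_def T2_def by auto
  qed
  have phT2': "\<phi> ` T1 \<subseteq> T2" using phT2 by auto
  have T12: "T1 \<inter> T2 = {}" unfolding T1_def T2_def by auto
  have ZT2: "Z \<subseteq> T2" unfolding Z_def by auto
  have WpT: "W p \<notin> T1" "W p \<notin> T2" using PWp unfolding T1_def T2_def by auto
  have disj1: "T1 \<inter> (\<phi> ` T1 \<union> ({W p} \<union> Z)) = {}"
    using phT2' T12 ZT2 WpT by blast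
  have disj2: "\<phi> ` T1 \<inter> ({W p} \<union> Z) = {}"
  proof -
    have "Z \<inter> \<phi> ` T1 = {}" unfolding Z_def by blast
    moreover have "W p \<notin> \<phi> ` T1"
    proof
      assume a: "W p \<in> \<phi> ` T1"
      from phT2' a have "W p \<in> T2" by (rule subsetD)
      then show False using WpT(2) by contradiction
    qed
    ultimately show ?thesis by auto
  qed
  have disj3: "{W p} \<inter> Z = {}" using ZT2 WpT by blast
  have T2split: "T2 = \<phi> ` T1 \<union> Z" using phT2 unfolding Z_def by auto
  have Wp1: "W (p + 1) \<in> Z"
  proof -
    have "W (p + 1) \<in> T2" using J pl2 unfolding T2_def VV_def Vs_def c_def by auto
    moreover have "W (p + 1) \<notin> \<phi> ` T1"
    proof
      assume "W (p + 1) \<in> \<phi> ` T1"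
      then obtain u where u: "u \<in> T1" "\<phi> u = W (p + 1)" by auto
      from T1_cases[OF u(1)] show False
      proof
        assume "\<exists>i. u = V i \<and> 1 \<le> i \<and> i \<le> p"
        then show False using u(2) unfolding \<phi>_def by auto
      next
        assume "\<exists>j. u = W j \<and> 1 \<le> j \<and> j \<le> a"
        then obtain j where "u = W j" "1 \<le> j" "j \<le> a" by blast
        then show False using u(2) ap unfolding \<phi>_def by auto
      qed
    qed
    ultimately show ?thesis unfolding Z_def by simp
  qed
  define XZ where "XZ = (\<Sum>z\<in>Z. x z)"
  have xposV: "\<And>v. v \<in> VV \<Longrightarrow> x v > 0" using xpos unfolding VV_def by blast
  have ZV: "Z \<subseteq> VV" unfolding Z_def T2_def by auto
  have XZpos: "XZ > 0" unfolding XZ_def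
    using finZ Wp1 ZV xposV by (intro sum_pos) auto
  have V1: "V 1 \<in> VV" "V 2 \<in> VV" using pl2 unfolding VV_def Vs_def by auto
  have rho_pos: "\<rho> > 0"
  proof -
    have "(\<Sum>v\<in>VV. real (hdist (Es l J) (V 1) v) * x v) = \<rho> * x (V 1)"
      using perron V1 unfolding VV_def by blast
    moreover have "(\<Sum>v\<in>VV. real (hdist (Es l J) (V 1) v) * x v) \<ge> real (hdist (Es l J) (V 1) (V 2)) * x (V 2)"
    proof (rule member_le_sum)
      fix v assume "v \<in> VV - {V 2}"
      then have "x v \<ge> 0" using xposV less_imp_le by blast
      then show "0 \<le> real (hdist (Es l J) (V 1) v) * x v" by simp
    qed (use finV V1 in auto)
    moreover have "real (hdist (Es l J) (V 1) (V 2)) = 1" using Dform[OF V1] by (simp add: dd_def)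
    ultimately have "\<rho> * x (V 1) > 0" using xposV[OF V1(2)] by simp
    then show ?thesis using xposV[OF V1(1)] by (simp add: zero_less_mult_iff)
  qed
  define S where "S = (\<lambda>u. real_of_int (c - P u))"
  define Hr where "Hr = (\<lambda>u. real_of_int (Hh u))"
  define g where "g = (\<lambda>w. x (\<phi> w) - x w)"
  define y where "y = (\<lambda>w. g w + (if w = V 1 then XZ else 0))"
  have V1T1: "V 1 \<in> T1" using V1 ap unfolding T1_def c_def by auto
  have T1V: "T1 \<subseteq> VV" unfolding T1_def by auto
  have SV1: "\<And>u. u \<in> T1 \<Longrightarrow> S u \<le> S (V 1)"
  proof -
    fix u assume u: "u \<in> T1"
    have "P u \<ge> 2" using T1_cases[OF u] by auto
    then show "S u \<le> S (V 1)" unfolding S_def by simp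
  qed
  have Spos: "\<forall>u\<in>T1. S u > 0" unfolding S_def T1_def by auto
  have HV1: "Hr (V 1) = 0" unfolding Hr_def by simp
  have Hnn: "\<forall>u\<in>T1. Hr u \<ge> 0" unfolding Hr_def using Hh_ge by simp
  have core: "\<And>u. u \<in> T1 \<Longrightarrow> (\<rho> + Hr u) * y u + (\<Sum>w\<in>T1. min (S u) (S w) * y w) \<ge> (if u = V 1 then \<rho> * XZ else 0)"
  proof -
    fix u assume u: "u \<in> T1"
    have uV: "u \<in> VV" using u T1V by auto
    have Pu: "P (\<phi> u) = 2*c - P u" and Hu: "Hh (\<phi> u) = Hh u" and phuV: "\<phi> u \<in> VV" using ph[OF u] by auto
    have Pu_lt: "P u < c" using u unfolding T1_def by simp
    define F where "F = (\<lambda>z. (real (hdist (Es l J) (\<phi> u) z) - real (hdist (Es l J) u z)) * x z)"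
    have e1: "\<rho> * g u = (\<Sum>z\<in>VV. F z)"
    proof -
      have a: "(\<Sum>v\<in>VV. real (hdist (Es l J) (\<phi> u) v) * x v) = \<rho> * x (\<phi> u)" using perron phuV unfolding VV_def by blast
      have b: "(\<Sum>v\<in>VV. real (hdist (Es l J) u v) * x v) = \<rho> * x u" using perron uV unfolding VV_def by blast
      have "(\<Sum>z\<in>VV. F z) = (\<Sum>v\<in>VV. real (hdist (Es l J) (\<phi> u) v) * x v) - (\<Sum>v\<in>VV. real (hdist (Es l J) u v) * x v)"
        unfolding F_def by (simp add: sum_subtractf left_diff_distrib)
      then show ?thesis using a b unfolding g_def by (simp add: right_diff_distrib)
    qed
    have fin1: "finite (\<phi> ` T1)" using finT1 by simp
    have e2: "(\<Sum>z\<in>VV. F z) = (\<Sum>w\<in>T1. F w) + (\<Sum>w\<in>T1. F (\<phi> w)) + F (W p) + (\<Sum>z\<in>Z. F z)"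
    proof -
      have "(\<Sum>z\<in>VV. F z) = (\<Sum>w\<in>T1. F w) + (\<Sum>z\<in>\<phi> ` T1 \<union> ({W p} \<union> Z). F z)"
        by (subst VVsplit, rule sum.union_disjoint) (use finT1 fin1 finZ disj1 in auto)
      also have "(\<Sum>z\<in>\<phi> ` T1 \<union> ({W p} \<union> Z). F z) = (\<Sum>z\<in>\<phi> ` T1. F z) + (\<Sum>z\<in>{W p} \<union> Z. F z)"
        by (rule sum.union_disjoint) (use fin1 finZ disj2 in auto)
      also have "(\<Sum>z\<in>{W p} \<union> Z. F z) = F (W p) + (\<Sum>z\<in>Z. F z)"
      proof -
        have "W p \<notin> Z" using disj3 by auto
        then show ?thesis using finZ by simp
      qed
      also have "(\<Sum>z\<in>\<phi> ` T1. F z) = (\<Sum>w\<in>T1. F (\<phi> w))" using sum.reindex[OF inj] by simp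
      finally show ?thesis by simp
    qed
    have e4: "\<And>w. w \<in> T1 \<Longrightarrow> F w + F (\<phi> w) = -(min (S u) (S w) + (if u = w then Hr u else 0)) * g w"
    proof -
      fix w assume w: "w \<in> T1"
      have wV: "w \<in> VV" using w T1V by auto
      have Pw: "P (\<phi> w) = 2*c - P w" and Hw: "Hh (\<phi> w) = Hh w" and phwV: "\<phi> w \<in> VV" using ph[OF w] by auto
      have Pw_lt: "P w < c" using w unfolding T1_def by simp
      note pa = pair_a[OF Pu_lt Pw_lt Pu Pw Hu Hw]
      have A: "real_of_int (dd u (\<phi> w)) - real_of_int (dd u w) = 2 * (min (S u) (S w) + (if u = w then Hr u else 0))"
      proof -
        have "real_of_int (dd u (\<phi> w) - dd u w) = real_of_int (2 * (min (c - P u) (c - P w) + (if u = w then Hh u else 0)))"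
          using pa(3) by simp
        then show ?thesis unfolding S_def Hr_def by (cases "u = w") (simp_all add: of_int_min)
      qed
      have "F w + F (\<phi> w) = (real_of_int (dd u (\<phi> w)) - real_of_int (dd u w)) / 2 * (x w - x (\<phi> w))"
      proof -
        have d1: "real (hdist (Es l J) (\<phi> u) w) = real_of_int (dd u (\<phi> w)) / 2"
          using Dform[OF phuV wV] pa(1) by simp
        have d2: "real (hdist (Es l J) u w) = real_of_int (dd u w) / 2"
          using Dform[OF uV wV] by simp
        have d3: "real (hdist (Es l J) (\<phi> u) (\<phi> w)) = real_of_int (dd u w) / 2"
          using Dform[OF phuV phwV] pa(2) by simp
        have d4: "real (hdist (Es l J) u (\<phi> w)) = real_of_int (dd u (\<phi> w)) / 2"
          using Dform[OF uV phwV] by simp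
        show ?thesis unfolding F_def d1 d2 d3 d4 by (simp add: field_simps)
      qed
      then show "F w + F (\<phi> w) = -(min (S u) (S w) + (if u = w then Hr u else 0)) * g w"
        unfolding g_def using A by (simp add: algebra_simps)
    qed
    have e5: "F (W p) = 0"
      unfolding F_def using Dform[OF phuV WpV] Dform[OF uV WpV] pair_b[OF Pu_lt Pu Hu PWp] by simp
    have e6: "(\<Sum>z\<in>Z. F z) \<ge> -(S u) * XZ"
    proof -
      have "(\<Sum>z\<in>Z. F z) \<ge> (\<Sum>z\<in>Z. -(S u) * x z)"
      proof (rule sum_mono)
        fix z assume z: "z \<in> Z"
        have zV: "z \<in> VV" using z ZV by auto
        have Pz: "P z > c" using z unfolding Z_def T2_def by auto
        have zne: "z \<noteq> \<phi> u" using z u unfolding Z_def by auto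
        have "dd (\<phi> u) z - dd u z \<ge> -2 * (c - P u)" using pair_c[OF Pu_lt Pu Hu Pz zne] .
        then have "real_of_int (-2 * (c - P u)) \<le> real_of_int (dd (\<phi> u) z - dd u z)"
          by (simp only: of_int_le_iff)
        then have "-2 * real_of_int (c - P u) \<le> real_of_int (dd (\<phi> u) z) - real_of_int (dd u z)"
          by simp
        then have "real_of_int (dd (\<phi> u) z) / 2 - real_of_int (dd u z) / 2 \<ge> -(S u)"
          unfolding S_def using half_aux by blast
        moreover have "x z > 0" using xposV zV by simp
        ultimately have "-(S u) \<le> real (hdist (Es l J) (\<phi> u) z) - real (hdist (Es l J) u z)"
          unfolding Dform[OF phuV zV] Dform[OF uV zV] by simp
        then show "-(S u) * x z \<le> F z"
          unfolding F_def using \<open>x z > 0\<close> by (intro mult_right_mono) auto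
      qed
      also have "(\<Sum>z\<in>Z. -(S u) * x z) = -(S u) * XZ" unfolding XZ_def by (simp add: sum_distrib_left)
      finally show ?thesis .
    qed
    have sum4: "(\<Sum>w\<in>T1. F w) + (\<Sum>w\<in>T1. F (\<phi> w)) = -(\<Sum>w\<in>T1. min (S u) (S w) * g w) - Hr u * g u"
    proof -
      have "(\<Sum>w\<in>T1. F w) + (\<Sum>w\<in>T1. F (\<phi> w)) = (\<Sum>w\<in>T1. F w + F (\<phi> w))" by (simp add: sum.distrib)
      also have "\<dots> = (\<Sum>w\<in>T1. -(min (S u) (S w) * g w) - (if u = w then Hr u * g u else 0))"
      proof (rule sum.cong)
        fix w assume w: "w \<in> T1"
        show "F w + F (\<phi> w) = -(min (S u) (S w) * g w) - (if u = w then Hr u * g u else 0)"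
          using e4[OF w] by (cases "u = w") (simp_all add: algebra_simps)
      qed simp
      also have "\<dots> = -(\<Sum>w\<in>T1. min (S u) (S w) * g w) - (\<Sum>w\<in>T1. (if u = w then Hr u * g u else 0))"
        by (simp add: sum_subtractf sum_negf)
      also have "(\<Sum>w\<in>T1. (if u = w then Hr u * g u else 0)) = Hr u * g u"
        using finT1 u by (simp add: sum.delta)
      finally show ?thesis .
    qed
    have sumY: "(\<Sum>w\<in>T1. min (S u) (S w) * y w) = (\<Sum>w\<in>T1. min (S u) (S w) * g w) + S u * XZ"
    proof -
      have "(\<Sum>w\<in>T1. min (S u) (S w) * y w) = (\<Sum>w\<in>T1. min (S u) (S w) * g w + (if w = V 1 then min (S u) (S w) * XZ else 0))"
        unfolding y_def by (intro sum.cong) (auto simp: algebra_simps)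
      also have "\<dots> = (\<Sum>w\<in>T1. min (S u) (S w) * g w) + min (S u) (S (V 1)) * XZ"
        using finT1 V1T1 by (simp add: sum.distrib sum.delta)
      also have "min (S u) (S (V 1)) = S u" using SV1[OF u] by simp
      finally show ?thesis .
    qed
    have yu: "(\<rho> + Hr u) * y u = \<rho> * g u + Hr u * g u + (if u = V 1 then \<rho> * XZ else 0)"
      unfolding y_def using HV1 by (cases "u = V 1") (simp_all add: algebra_simps)
    have "\<rho> * g u \<ge> -(\<Sum>w\<in>T1. min (S u) (S w) * g w) - Hr u * g u - S u * XZ"
      using e1 e2 sum4 e5 e6 by linarith
    then show "(\<rho> + Hr u) * y u + (\<Sum>w\<in>T1. min (S u) (S w) * y w) \<ge> (if u = V 1 then \<rho> * XZ else 0)"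
      using yu sumY by linarith
  qed
  have rXZ: "\<rho> * XZ > 0" using rho_pos XZpos by simp
  have ypos: "(\<Sum>w\<in>T1. y w) > 0"
  proof (rule key_extremal[OF finT1 rho_pos Spos Hnn V1T1])
    show "\<forall>u\<in>T1. 0 \<le> (\<rho> + Hr u) * y u + (\<Sum>w\<in>T1. min (S u) (S w) * y w)"
    proof
      fix u assume u: "u \<in> T1"
      have "(if u = V 1 then \<rho> * XZ else 0) \<ge> 0" using rXZ by simp
      then show "0 \<le> (\<rho> + Hr u) * y u + (\<Sum>w\<in>T1. min (S u) (S w) * y w)" using core[OF u] by linarith
    qed
    show "0 < (\<rho> + Hr (V 1)) * y (V 1) + (\<Sum>w\<in>T1. min (S (V 1)) (S w) * y w)"
      using core[OF V1T1] rXZ by simp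
  qed
  have sumy: "(\<Sum>w\<in>T1. y w) = (\<Sum>v\<in>T2. x v) - (\<Sum>v\<in>T1. x v)"
  proof -
    have "(\<Sum>w\<in>T1. y w) = (\<Sum>w\<in>T1. g w) + XZ"
      unfolding y_def using finT1 V1T1 by (simp add: sum.distrib sum.delta)
    also have "(\<Sum>w\<in>T1. g w) = (\<Sum>w\<in>T1. x (\<phi> w)) - (\<Sum>w\<in>T1. x w)"
      unfolding g_def by (simp add: sum_subtractf)
    also have "(\<Sum>w\<in>T1. x (\<phi> w)) = (\<Sum>v\<in>\<phi> ` T1. x v)" by (simp add: sum.reindex[OF inj] comp_def)
    also have "(\<Sum>v\<in>T2. x v) = (\<Sum>v\<in>\<phi> ` T1. x v) + XZ"
    proof -
      have "\<phi> ` T1 \<inter> Z = {}" unfolding Z_def by blast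
      then show ?thesis unfolding XZ_def using T2split finT1 finZ by (simp add: sum.union_disjoint)
    qed
    ultimately show ?thesis by simp
  qed
  have "(\<Sum>v\<in>T1. x v) < (\<Sum>v\<in>T2. x v)" using ypos sumy by simp
  then show ?thesis unfolding T1_def T2_def VV_def c_def .
qed



lemma edges_eq: "J \<subseteq> K \<Longrightarrow> (\<lambda>i. {V i, W i, V (Suc i)}) ` J \<union> (\<lambda>i. {V i, V (Suc i)}) ` (K - J) = ed J ` K"
proof
  assume JK: "J \<subseteq> K"
  show "(\<lambda>i. {V i, W i, V (Suc i)}) ` J \<union> (\<lambda>i. {V i, V (Suc i)}) ` (K - J) \<subseteq> ed J ` K"
  proof
    fix f assume "f \<in> (\<lambda>i. {V i, W i, V (Suc i)}) ` J \<union> (\<lambda>i. {V i, V (Suc i)}) ` (K - J)"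
    then obtain i where "(i \<in> J \<and> f = {V i, W i, V (Suc i)}) \<or> (i \<in> K - J \<and> f = {V i, V (Suc i)})" by blast
    then have "i \<in> K \<and> f = ed J i" using JK unfolding ed_def by auto
    then show "f \<in> ed J ` K" by blast
  qed
next
  show "ed J ` K \<subseteq> (\<lambda>i. {V i, W i, V (Suc i)}) ` J \<union> (\<lambda>i. {V i, V (Suc i)}) ` (K - J)"
    unfolding ed_def by auto
qed

theorem lemma3p1:
  fixes n a b :: nat and x :: "vtx \<Rightarrow> real" and e :: "vtx set"
  assumes "b \<ge> a + 2" and "2 * (a + b) < n - 1"
    and "perron_vector (Tverts n a b) (Tedges n a b) x"
    and "e \<in> Tedges n a b"
    and "V (n - a - b - b) \<in> e" and "V (n - a - b - b + 1) \<in> e"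
    and "2 * b \<ge> n - a - b"
  shows "(\<Sum>v\<in>hcomponent (Tverts n a b) (Tedges n a b - {e}) (V (n - a - b - b)). x v)
       < (\<Sum>v\<in>hcomponent (Tverts n a b) (Tedges n a b - {e}) (V (n - a - b - b + 1)). x v)"
proof -
  define l where "l = n - a - b"
  define p where "p = l - b"
  define J where "J = Tidx n a b"
  have pdef: "n - a - b - b = p" unfolding p_def l_def by simp
  have J': "J = {1..a} \<union> {p..l-1}" unfolding J_def Tidx_def p_def l_def by simp
  have n1: "2 * (a + b) + 1 < n" using assms(2) by (simp add: less_diff_conv)
  have n2: "2 * a + 2 * b + 2 \<le> n" using n1 by simp
  have ln: "l + a + b = n" unfolding l_def using n2 by simp
  have pb: "p + b = l" unfolding p_def using ln n2 by simp
  have ap: "a + 2 \<le> p" using ln n2 pb by linarith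
  have pl: "2 * p \<le> l" using assms(7) pb unfolding l_def[symmetric] by linarith
  have pl2: "p + 2 \<le> l" using assms(1) pb by linarith
  have Jsub: "J \<subseteq> {1..l-1}" using J' ap pl by auto
  have TV: "Tverts n a b = Vs l J" unfolding Tverts_def Vs_def J_def l_def by simp
  have TE: "Tedges n a b = Es l J"
    unfolding Tedges_def Es_def Let_def using edges_eq[OF Jsub] unfolding J_def l_def by simp
  have eE: "e \<in> Es l J" using assms(4) TE by simp
  have ee: "e = ed J p" using e_is[OF eE] assms(5,6) pdef by simp
  have p1: "1 \<le> p" "p + 1 \<le> l" using ap pl2 by auto
  have cl: "hcomponent (Vs l J) (Es l J - {ed J p}) (V p) = {u \<in> Vs l J. P u < 2 * int p + 1}"
    using comp_left[OF Jsub p1] .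
  have cr: "hcomponent (Vs l J) (Es l J - {ed J p}) (V (p + 1)) = {u \<in> Vs l J. P u > 2 * int p + 1}"
    using comp_right[OF Jsub p1] .
  have pv: "\<forall>v\<in>Vs l J. x v > 0"
    "\<forall>u\<in>Vs l J. (\<Sum>v\<in>Vs l J. real (hdist (Es l J) u v) * x v) = dist_spec_radius (Vs l J) (Es l J) * x u"
    using assms(3) unfolding perron_vector_def TV TE by auto
  have "(\<Sum>v\<in>{u \<in> Vs l J. P u < 2 * int p + 1}. x v) < (\<Sum>v\<in>{u \<in> Vs l J. P u > 2 * int p + 1}. x v)"
    by (rule main_ineq[OF J' ap pl pl2 pv])
  then show ?thesis unfolding TV TE ee pdef cl cr .
qed


end
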